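(* Let $\mathfrak{C}=(U,M,I,N,J)$ be a formal decision context. Then the set of necessary I-decision rules of $\mathfrak{C}$ is $$\overline{\mathfrak{R}}_{I}(\mathfrak{C})=\{(\cup [O]_{R_1},(\cup [O]_{R_1})^{\square_M})\rightarrow(O^{\uparrow_N\downarrow_N},O^{\uparrow_N})\mid O\in \mathrm{Ext}L_O(\mathfrak{C}_M),\ O\neq\emptyset,\ O^{\uparrow_N\downarrow_N}\neq U\}.$$
   Context: Formal context $(U,M,I)$: $U$ and $M$ are finite nonempty sets and $I\subseteq U\times M$. For $O\subseteq U$ and $C\subseteq M$ define: - $O^{\uparrow}=\{a\in M\mid \forall x\in O\,((x,a)\in I)\}$ and $C^{\downarrow}=\{x\in U\mid \forall a\in C\,((x,a)\in I)\}$; - $O^{\square}=\{a\in M\mid \forall x\in U\,((x,a)\in I\Rightarrow x\in O)\}$ and $C^{\lozenge}=\{x\in U\mid \exists a\in C\,((x,a)\in I)\}$. A formal concept is a pair $(O,C)$ with $O^\uparrow=C$ and $C^\downarrow=O$ (set $L$). An object-oriented concept is a pair $(O,C)$ with $O^\square=C$ and $C^\lozenge=O$ (set $L_O$). $\mathrm{Ext}$ denotes the set of extents (first components). Standing assumption: contexts are canonical, i.e. for all $x\in U$ and $a\in M$ we have $\{x\}^\uparrow\notin\{\emptyset,M\}$ and $\{a\}^\downarrow\notin\{\emptyset,U\}$. A formal decision context $\mathfrak{C}=(U,M,I,N,J)$ has conditional context $\mathfrak{C}_M=(U,M,I)$ and decision context $\mathfrak{C}_N=(U,N,J)$, with $M\cap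 N=\emptyset$. Operators carry the subscript $M$ or $N$ according to the context in which they are computed. An I-decision rule is $(O,C)\rightarrow(Y,D)$ with $(O,C)\in L_O(\mathfrak{C}_M)$, $(Y,D)\in L(\mathfrak{C}_N)$, $O\subseteq Y$, $O\ne\emptyset$ and $Y\ne U$; the set of these is $\mathfrak{R}_I(\mathfrak{C})$. Implication: $(O_1,C_1)\rightarrow(Y_1,D_1)\Rightarrow(O_2,C_2)\rightarrow(Y_2,D_2)$ iff $O_2\subseteq O_1\subseteq Y_1\subseteq Y_2$. A rule $r$ is necessary if there is no $r_1\in\mathfrak{R}_I(\mathfrak{C})$ with $r_1\neq r$ and $r_1\Rightarrow r$. $R_1$ is the equivalence relation on $\mathrm{Ext}L_O(\mathfrak{C}_M)$ given by $(O,Y)\in R_1$ iff $O^{\uparrow_N}=Y^{\uparrow_N}$. $[O]_{R_1}$ is the class of $O$, and $\cup[O]_{R_1}$ is the union of its members. *)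

theory Defs
  imports Main
begin

definition up :: "'m set \<Rightarrow> ('u \<times> 'm) set \<Rightarrow> 'u set \<Rightarrow> 'm set" where
  "up M I X = {a \<in> M. \<forall>x\<in>X. (x, a) \<in> I}"

definition down :: "'u set \<Rightarrow> ('u \<times> 'm) set \<Rightarrow> 'm set \<Rightarrow> 'u set" where
  "down U I C = {x \<in> U. \<forall>a\<in>C. (x, a) \<in> I}"

definition box :: "'u set \<Rightarrow> 'm set \<Rightarrow> ('u \<times> 'm) set \<Rightarrow> 'u set \<Rightarrow> 'm set" where
  "box U M I X = {a \<in> M. \<forall>x\<in>U. (x, a) \<in> I \<longrightarrow> x \<in> X}"

definition dia :: "'u set \<Rightarrow> ('u \<times> 'm) set \<Rightarrow> 'm set \<Rightarrow> 'u set" where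
  "dia U I C = {x \<in> U. \<exists>a\<in>C. (x, a) \<in> I}"

definition formal_context :: "'u set \<Rightarrow> 'm set \<Rightarrow> ('u \<times> 'm) set \<Rightarrow> bool" where
  "formal_context U M I \<longleftrightarrow> finite U \<and> finite M \<and> U \<noteq> {} \<and> M \<noteq> {} \<and> I \<subseteq> U \<times> M"

definition canonical :: "'u set \<Rightarrow> 'm set \<Rightarrow> ('u \<times> 'm) set \<Rightarrow> bool" where
  "canonical U M I \<longleftrightarrow>
     (\<forall>x\<in>U. up M I {x} \<noteq> {} \<and> up M I {x} \<noteq> M) \<and>
     (\<forall>a\<in>M. down U I {a} \<noteq> {} \<and> down U I {a} \<noteq> U)"

definition concepts :: "'u set \<Rightarrow> 'm set \<Rightarrow> ('u \<times> 'm) set \<Rightarrow> ('u set \<times> 'm set) set" where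
  "concepts U M I = {(X, C). up M I X = C \<and> down U I C = X}"

definition oo_concepts :: "'u set \<Rightarrow> 'm set \<Rightarrow> ('u \<times> 'm) set \<Rightarrow> ('u set \<times> 'm set) set" where
  "oo_concepts U M I = {(X, C). box U M I X = C \<and> dia U I C = X}"

definition Ext :: "('u set \<times> 'm set) set \<Rightarrow> 'u set set" where
  "Ext L = fst ` L"

text \<open>Conditional attributes have type 'm, decision attributes type 'n;
  the two attribute sets are therefore disjoint by typing.\<close>
definition formal_decision_context ::
  "'u set \<Rightarrow> 'm set \<Rightarrow> ('u \<times> 'm) set \<Rightarrow> 'n set \<Rightarrow> ('u \<times> 'n) set \<Rightarrow> bool" where
  "formal_decision_context U M I N J \<longleftrightarrow>
     formal_context U M I \<and> formal_context U N J \<and> canonical U M I \<and> canonical U N J"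

text \<open>A rule (X,C) \<rightarrow> (Y,D) is represented as the pair ((X,C),(Y,D)).\<close>
type_synonym ('u, 'm, 'n) rule = "('u set \<times> 'm set) \<times> ('u set \<times> 'n set)"

definition I_rules ::
  "'u set \<Rightarrow> 'm set \<Rightarrow> ('u \<times> 'm) set \<Rightarrow> 'n set \<Rightarrow> ('u \<times> 'n) set \<Rightarrow> ('u, 'm, 'n) rule set" where
  "I_rules U M I N J = {((X, C), (Y, D)).
      (X, C) \<in> oo_concepts U M I \<and> (Y, D) \<in> concepts U N J \<and> X \<subseteq> Y \<and> X \<noteq> {} \<and> Y \<noteq> U}"

definition rule_implies :: "('u, 'm, 'n) rule \<Rightarrow> ('u, 'm, 'n) rule \<Rightarrow> bool" where
  "rule_implies r1 r2 \<longleftrightarrow>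
     (case r1 of ((X1, C1), (Y1, D1)) \<Rightarrow> case r2 of ((X2, C2), (Y2, D2)) \<Rightarrow>
        X2 \<subseteq> X1 \<and> X1 \<subseteq> Y1 \<and> Y1 \<subseteq> Y2)"

definition necessary_I_rules ::
  "'u set \<Rightarrow> 'm set \<Rightarrow> ('u \<times> 'm) set \<Rightarrow> 'n set \<Rightarrow> ('u \<times> 'n) set \<Rightarrow> ('u, 'm, 'n) rule set" where
  "necessary_I_rules U M I N J = {r \<in> I_rules U M I N J.
      \<not> (\<exists>r1 \<in> I_rules U M I N J. r1 \<noteq> r \<and> rule_implies r1 r)}"

definition R1_class ::
  "'u set \<Rightarrow> 'm set \<Rightarrow> ('u \<times> 'm) set \<Rightarrow> 'n set \<Rightarrow> ('u \<times> 'n) set \<Rightarrow> 'u set \<Rightarrow> 'u set set" where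
  "R1_class U M I N J X = {Y \<in> Ext (oo_concepts U M I). up N J X = up N J Y}"

end

theory Submission
  imports Defs
begin

lemma ext_iff: "X \<in> Ext (oo_concepts U M I) \<longleftrightarrow> dia U I (box U M I X) = X"
proof
  assume "X \<in> Ext (oo_concepts U M I)"
  then obtain p where p: "p \<in> oo_concepts U M I" "X = fst p" unfolding Ext_def by blast
  obtain Y C where pc: "p = (Y, C)" by (cases p)
  have "box U M I Y = C \<and> dia U I C = Y" using p(1) unfolding pc oo_concepts_def mem_Collect_eq case_prod_conv .
  then show "dia U I (box U M I X) = X" using p(2) pc by simp
next
  assume h: "dia U I (box U M I X) = X"
  have "(X, box U M I X) \<in> oo_concepts U M I" unfolding oo_concepts_def mem_Collect_eq case_prod_conv using h by simp
  then show "X \<in> Ext (oo_concepts U M I)" unfolding Ext_def by (rule rev_image_eqI) simp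
qed

lemma ext_sub: "X \<in> Ext (oo_concepts U M I) \<Longrightarrow> X \<subseteq> U"
proof -
  assume "X \<in> Ext (oo_concepts U M I)"
  then have "dia U I (box U M I X) = X" by (rule ext_iff[THEN iffD1])
  moreover have "dia U I (box U M I X) \<subseteq> U" unfolding dia_def by blast
  ultimately show ?thesis by simp
qed

lemma ext_Union:
  assumes "S \<subseteq> Ext (oo_concepts U M I)"
  shows "\<Union>S \<in> Ext (oo_concepts U M I)"
proof -
  have "dia U I (box U M I (\<Union>S)) = \<Union>S"
  proof
    show "dia U I (box U M I (\<Union>S)) \<subseteq> \<Union>S" unfolding dia_def box_def by blast
  next
    show "\<Union>S \<subseteq> dia U I (box U M I (\<Union>S))"
    proof
      fix x assume "x \<in> \<Union>S"
      then obtain Y where Y: "Y \<in> S" "x \<in> Y" by blast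
      have "Y \<in> Ext (oo_concepts U M I)" using Y(1) assms by blast
      then have "dia U I (box U M I Y) = Y" by (rule ext_iff[THEN iffD1])
      then have "x \<in> dia U I (box U M I Y)" using Y(2) by simp
      moreover have "box U M I Y \<subseteq> box U M I (\<Union>S)" using Y unfolding box_def by blast
      ultimately show "x \<in> dia U I (box U M I (\<Union>S))" unfolding dia_def by blast
    qed
  qed
  then show ?thesis by (rule ext_iff[THEN iffD2])
qed

lemma oo_box: "X \<in> Ext (oo_concepts U M I) \<Longrightarrow> (X, box U M I X) \<in> oo_concepts U M I"
proof -
  assume "X \<in> Ext (oo_concepts U M I)"
  then have "dia U I (box U M I X) = X" by (rule ext_iff[THEN iffD1])
  then show ?thesis unfolding oo_concepts_def by simp
qed

lemma up_down_up: "X \<subseteq> U \<Longrightarrow> up N J (down U J (up N J X)) = up N J X"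
  unfolding up_def down_def by blast

lemma concept_du: "X \<subseteq> U \<Longrightarrow> (down U J (up N J X), up N J X) \<in> concepts U N J"
proof -
  assume "X \<subseteq> U"
  then have "up N J (down U J (up N J X)) = up N J X" by (rule up_down_up)
  then show ?thesis unfolding concepts_def mem_Collect_eq case_prod_conv by (intro conjI refl)
qed

lemma sub_du: "X \<subseteq> U \<Longrightarrow> X \<subseteq> down U J (up N J X)"
  unfolding up_def down_def by blast

lemma up_anti: "X \<subseteq> Y \<Longrightarrow> up N J Y \<subseteq> up N J X"
  unfolding up_def by blast

lemma down_anti: "C \<subseteq> D \<Longrightarrow> down U J D \<subseteq> down U J C"
  unfolding down_def by blast

lemma up_Union: "S \<noteq> {} \<Longrightarrow> \<forall>Y\<in>S. up N J Y = D \<Longrightarrow> up N J (\<Union>S) = D"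
  unfolding up_def by blast

lemma class_props:
  fixes N J
  assumes X: "X \<in> Ext (oo_concepts U M I)"
  defines "S \<equiv> R1_class U M I N J X"
  shows "X \<in> S" "\<Union>S \<in> Ext (oo_concepts U M I)" "up N J (\<Union>S) = up N J X"
    "X \<subseteq> \<Union>S" "\<Union>S \<subseteq> down U J (up N J X)"
proof -
  show 1: "X \<in> S" unfolding S_def R1_class_def mem_Collect_eq by (intro conjI X refl)
  have Ssub: "S \<subseteq> Ext (oo_concepts U M I)" unfolding S_def R1_class_def by (rule Collect_subset)
  show 2: "\<Union>S \<in> Ext (oo_concepts U M I)" by (rule ext_Union[OF Ssub])
  have Sne: "S \<noteq> {}" using 1 by blast
  have Sall: "\<forall>Y\<in>S. up N J Y = up N J X" unfolding S_def R1_class_def by blast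
  show 3: "up N J (\<Union>S) = up N J X" by (rule up_Union[OF Sne Sall])
  show "X \<subseteq> \<Union>S" using 1 by (rule Union_upper)
  have "\<Union>S \<subseteq> down U J (up N J (\<Union>S))" by (rule sub_du[OF ext_sub[OF 2]])
  then show "\<Union>S \<subseteq> down U J (up N J X)" unfolding 3 .
qed

lemma I_rulesI: "(X, C) \<in> oo_concepts U M I \<Longrightarrow> (Y, D) \<in> concepts U N J \<Longrightarrow> X \<subseteq> Y
  \<Longrightarrow> X \<noteq> {} \<Longrightarrow> Y \<noteq> U \<Longrightarrow> ((X, C), (Y, D)) \<in> I_rules U M I N J"
  unfolding I_rules_def by simp

theorem theorem3p5:
  fixes U :: "'u set" and M :: "'m set" and I :: "('u \<times> 'm) set"
    and N :: "'n set" and J :: "('u \<times> 'n) set"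
  assumes "formal_decision_context U M I N J"
  shows "necessary_I_rules U M I N J =
    {((\<Union>(R1_class U M I N J X), box U M I (\<Union>(R1_class U M I N J X))),
      (down U J (up N J X), up N J X)) | X.
       X \<in> Ext (oo_concepts U M I) \<and> X \<noteq> {} \<and> down U J (up N J X) \<noteq> U}"
  (is "?A = ?B")
proof
  show "?B \<subseteq> ?A"
  proof
    fix r assume "r \<in> ?B"
    then have "\<exists>X. r = ((\<Union>(R1_class U M I N J X), box U M I (\<Union>(R1_class U M I N J X))),
      (down U J (up N J X), up N J X)) \<and>
       X \<in> Ext (oo_concepts U M I) \<and> X \<noteq> {} \<and> down U J (up N J X) \<noteq> U" by (rule CollectD)
    then obtain X where X: "X \<in> Ext (oo_concepts U M I)" "X \<noteq> {}" "down U J (up N J X) \<noteq> U"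
      and r: "r = ((\<Union>(R1_class U M I N J X), box U M I (\<Union>(R1_class U M I N J X))),
      (down U J (up N J X), up N J X))" by blast
    let ?S = "R1_class U M I N J X"
    note cp = class_props[OF X(1), of N J]
    have XU: "X \<subseteq> U" using ext_sub X(1) by blast
    have rI: "r \<in> I_rules U M I N J"
      unfolding r
    proof (rule I_rulesI[OF oo_box[OF cp(2)] concept_du[OF XU]])
      show "\<Union> ?S \<subseteq> down U J (up N J X)" by (rule cp(5))
      show "\<Union> ?S \<noteq> {}" using cp(4) X(2) by blast
      show "down U J (up N J X) \<noteq> U" by (rule X(3))
    qed
    have "\<not> (\<exists>r1 \<in> I_rules U M I N J. r1 \<noteq> r \<and> rule_implies r1 r)"
    proof
      assume "\<exists>r1 \<in> I_rules U M I N J. r1 \<noteq> r \<and> rule_implies r1 r"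
      then obtain r1 where r1': "r1 \<in> I_rules U M I N J" "r1 \<noteq> r" "rule_implies r1 r" by blast
      obtain XC1 YD1 where r0: "r1 = (XC1, YD1)" by (cases r1)
      obtain X1 C1 where xc: "XC1 = (X1, C1)" by (cases XC1)
      obtain Y1 D1 where yd: "YD1 = (Y1, D1)" by (cases YD1)
      have r1eq: "r1 = ((X1,C1),(Y1,D1))" using r0 xc yd by simp
      have r1: "((X1,C1),(Y1,D1)) \<in> I_rules U M I N J"
        "((X1,C1),(Y1,D1)) \<noteq> r" "rule_implies ((X1,C1),(Y1,D1)) r" using r1' unfolding r1eq by simp_all
      have h: "\<Union>?S \<subseteq> X1" "X1 \<subseteq> Y1" "Y1 \<subseteq> down U J (up N J X)"
        using r1(3) unfolding r rule_implies_def by auto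
      have oo1: "(X1,C1) \<in> oo_concepts U M I" and c1: "(Y1,D1) \<in> concepts U N J"
        using r1(1) unfolding I_rules_def by auto
      have E1: "X1 \<in> Ext (oo_concepts U M I)" using oo1 unfolding Ext_def by force
      have C1c: "box U M I X1 = C1 \<and> dia U I C1 = X1" using oo1 unfolding oo_concepts_def mem_Collect_eq case_prod_conv .
      have C1: "C1 = box U M I X1" using C1c by (rule sym[OF conjunct1])
      have Y1c: "up N J Y1 = D1 \<and> down U J D1 = Y1" using c1 unfolding concepts_def mem_Collect_eq case_prod_conv .
      have Y1: "Y1 = down U J D1" "D1 = up N J Y1" using Y1c by simp_all
      have "up N J (down U J (up N J X)) \<subseteq> up N J X1" by (rule order_trans[OF up_anti[OF h(3)] up_anti[OF h(2)]])
      then have "up N J X \<subseteq> up N J X1" using up_down_up[OF XU, where N=N and J=J] by simp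
      moreover have "up N J X1 \<subseteq> up N J X" using up_anti[OF h(1), where N=N and J=J] cp(3) by simp
      ultimately have "up N J X1 = up N J X" by blast
      then have "X1 \<in> ?S" using E1 unfolding R1_class_def by simp
      then have X1eq: "X1 = \<Union>?S" using h(1) by blast
      have "up N J Y1 \<subseteq> up N J X1" using up_anti[OF h(2), where N=N and J=J] .
      then have "up N J Y1 \<subseteq> up N J X" using \<open>up N J X1 = up N J X\<close> by simp
      moreover have "up N J X \<subseteq> up N J Y1" using up_anti[OF h(3), where N=N and J=J] up_down_up[OF XU, where N=N and J=J] by simp
      ultimately have "up N J Y1 = up N J X" by (rule equalityI)
      then have D1: "D1 = up N J X" using Y1(2) by simp
      have "((X1,C1),(Y1,D1)) = r" unfolding r using X1eq C1 D1 Y1(1) by simp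
      then show False using r1(2) by blast
    qed
    then show "r \<in> ?A" unfolding necessary_I_rules_def by (intro CollectI conjI rI)
  qed
next
  show "?A \<subseteq> ?B"
  proof
    fix r assume rA: "r \<in> ?A"
    obtain XC YD where r0: "r = (XC, YD)" by (cases r)
    obtain X C where xc: "XC = (X, C)" by (cases XC)
    obtain Y D where yd: "YD = (Y, D)" by (cases YD)
    have r: "r = ((X,C),(Y,D))" using r0 xc yd by simp
    have rI: "r \<in> I_rules U M I N J"
      using rA unfolding necessary_I_rules_def mem_Collect_eq by (rule conjunct1)
    have nec: "\<not> (\<exists>r1 \<in> I_rules U M I N J. r1 \<noteq> r \<and> rule_implies r1 r)"
      using rA unfolding necessary_I_rules_def mem_Collect_eq by (rule conjunct2)
    have oo: "(X,C) \<in> oo_concepts U M I" and c: "(Y,D) \<in> concepts U N J"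
      and XY: "X \<subseteq> Y" and Xne: "X \<noteq> {}" and YU: "Y \<noteq> U"
      using rI unfolding r I_rules_def by auto
    have E: "X \<in> Ext (oo_concepts U M I)" using oo unfolding Ext_def by force
    have XU: "X \<subseteq> U" using ext_sub E by blast
    have Ycc: "up N J Y = D \<and> down U J D = Y" using c unfolding concepts_def mem_Collect_eq case_prod_conv .
    have Yc: "Y = down U J D" "D = up N J Y" using Ycc by simp_all
    have "down U J (up N J X) \<subseteq> down U J (up N J Y)" by (rule down_anti[OF up_anti[OF XY]])
    moreover have "down U J (up N J Y) = Y" by (simp only: Yc(2)[symmetric] Yc(1)[symmetric])
    ultimately have duY: "down U J (up N J X) \<subseteq> Y" by simp
    have YsubU: "Y \<subseteq> U" using Yc(1) unfolding down_def by blast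
    have duU: "down U J (up N J X) \<noteq> U" using duY YsubU YU by blast
    let ?S = "R1_class U M I N J X"
    note cp = class_props[OF E, of N J]
    define r' where "r' = ((\<Union>?S, box U M I (\<Union>?S)), (down U J (up N J X), up N J X))"
    have r'I: "r' \<in> I_rules U M I N J"
      unfolding r'_def
    proof (rule I_rulesI[OF oo_box[OF cp(2)] concept_du[OF XU]])
      show "\<Union> ?S \<subseteq> down U J (up N J X)" by (rule cp(5))
      show "\<Union> ?S \<noteq> {}" using cp(4) Xne by blast
      show "down U J (up N J X) \<noteq> U" by (rule duU)
    qed
    have "rule_implies r' r" unfolding r'_def r rule_implies_def using cp(4) cp(5) duY by simp
    then have "r' = r" using nec r'I by blast
    have req: "r = ((\<Union>?S, box U M I (\<Union>?S)), (down U J (up N J X), up N J X))"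
      using \<open>r' = r\<close> unfolding r'_def by (rule sym)
    have "\<exists>X'. r = ((\<Union>(R1_class U M I N J X'), box U M I (\<Union>(R1_class U M I N J X'))),
      (down U J (up N J X'), up N J X')) \<and>
       X' \<in> Ext (oo_concepts U M I) \<and> X' \<noteq> {} \<and> down U J (up N J X') \<noteq> U"
      by (intro exI[of _ X] conjI req E Xne duU)
    then show "r \<in> ?B" by (rule CollectI)
  qed
qed

end
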